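(* Let $\tilde{\mathcal Z}\subseteq[0,1]^d$ and let $\mathcal Z_1,\dots,\mathcal Z_{3^d}$ be mutually disjoint subregions of $\tilde{\mathcal Z}$. Let $\Delta=\lfloor3^d/2\rfloor$. Apply an admissible algorithm with budget $n$ to any given CSO problem. If $\mathbb{P}(\tau(\tilde{\mathcal Z})\le n-\Delta)>0$, then there exists $\kappa_1$ such that $\mathbb{P}\bigl(\tau(\mathcal Z_{\kappa_1})\ge\tau(\tilde{\mathcal Z})+\Delta\bigm|\tau(\tilde{\mathcal Z})\le n-\Delta\bigr)\ge\frac12$. If $\mathbb{P}(\tau(\tilde{\mathcal Z})\le n-\Delta)<1$, then there exists $\kappa_2$ such that $\mathbb{P}\bigl(\tau(\mathcal Z_{\kappa_2})>n\bigm|\tau(\tilde{\mathcal Z})>n-\Delta\bigr)\ge\frac12$.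
   Context: A CSO problem: objective $y:[0,1]^d\to\mathbb{R}$; a query at $\mathbf{x}$ returns $Y(\mathbf{x})=y(\mathbf{x})+\varepsilon(\mathbf{x})$ with noise independent of everything else. Admissible algorithm with budget $n$: (i) $\mathbf{x}_1$ deterministic or a measurable function of a random vector $U_1$; (ii) for $t=1,\dots,n-1$, $\mathbf{x}_{t+1}$ a measurable function of $\mathbf{x}_1,Y(\mathbf{x}_1),\dots,\mathbf{x}_t,Y(\mathbf{x}_t)$ and a random vector $U_{t+1}$; (iii) output $\hat{\mathbf{x}}_n^*$ a measurable function of the full history and a random vector $U_n^*$; (iv) $\hat{\mathbf{x}}_n^*\in\{\mathbf{x}_1,\dots,\mathbf{x}_n\}$; the $U$'s are independent random vectors independent of the noise. First hitting time: $\tau(\mathcal Z)=\min\{t\in\{1,\dots,n\}:\mathbf{x}_t\in\mathcal Z\}$ if some $\mathbf{x}_t\in\mathcal Z$, and $\tau(\mathcal Z)=n+1$ otherwise. *)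

theory Defs
  imports "HOL-Probability.Probability"
begin

text \<open>The unit cube [0,1]^d, with d = CARD('d).\<close>
definition unit_cube :: "(real ^ 'd) set" where
  "unit_cube = {x. \<forall>i. 0 \<le> x $ i \<and> x $ i \<le> 1}"

definition hit_time :: "nat \<Rightarrow> (nat \<Rightarrow> 'w \<Rightarrow> 'p) \<Rightarrow> 'p set \<Rightarrow> 'w \<Rightarrow> nat" where
  "hit_time n x Z \<omega> =
     (if \<exists>t\<in>{1..n}. x t \<omega> \<in> Z then (LEAST t. t \<in> {1..n} \<and> x t \<omega> \<in> Z) else n + 1)"

definition history ::
  "(real ^ 'd \<Rightarrow> real) \<Rightarrow> (real ^ 'd \<Rightarrow> 'w \<Rightarrow> real) \<Rightarrow> (nat \<Rightarrow> 'w \<Rightarrow> real ^ 'd)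
    \<Rightarrow> nat \<Rightarrow> 'w \<Rightarrow> nat \<Rightarrow> (real ^ 'd) \<times> real" where
  "history y eps x t \<omega> = (\<lambda>s\<in>{1..t}. (x s \<omega>, y (x s \<omega>) + eps (x s \<omega>) \<omega>))"

text \<open>Admissible algorithm with budget n run on the CSO problem with objective y and noise eps,
  on the probability space M.\<close>
definition admissible_run ::
  "'w measure \<Rightarrow> (real ^ 'd \<Rightarrow> real) \<Rightarrow> (real ^ 'd \<Rightarrow> 'w \<Rightarrow> real) \<Rightarrow> nat
    \<Rightarrow> (nat \<Rightarrow> 'w \<Rightarrow> 'u::euclidean_space) \<Rightarrow> ('w \<Rightarrow> 'u)
    \<Rightarrow> (nat \<Rightarrow> 'w \<Rightarrow> real ^ 'd) \<Rightarrow> ('w \<Rightarrow> real ^ 'd) \<Rightarrow> bool" where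
  "admissible_run M y eps n U Ustar x xhat \<longleftrightarrow>
     (\<comment> \<open>U's: independent random vectors, jointly independent of the noise\<close>
      (\<forall>t\<in>{1..n}. U t \<in> borel_measurable M) \<and> Ustar \<in> borel_measurable M \<and>
      prob_space.indep_vars M (\<lambda>_. borel)
        (\<lambda>i. case i of Some t \<Rightarrow> U t | None \<Rightarrow> Ustar) (insert None (Some ` {1..n})) \<and>
      prob_space.indep_set M
        (sets (vimage_algebra (space M) (\<lambda>\<omega>. \<lambda>z. eps z \<omega>) (Pi\<^sub>M UNIV (\<lambda>_. borel))))
        (sets (vimage_algebra (space M)
           (\<lambda>\<omega>. \<lambda>i\<in>insert None (Some ` {1..n}). (case i of Some t \<Rightarrow> U t \<omega> | None \<Rightarrow> Ustar \<omega>))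
           (Pi\<^sub>M (insert None (Some ` {1..n})) (\<lambda>_. borel)))) \<and>
      \<comment> \<open>(i) first query: measurable function of U_1 (constant = deterministic)\<close>
      (\<exists>f1 \<in> borel_measurable borel. \<forall>\<omega>\<in>space M. x 1 \<omega> = f1 (U 1 \<omega>)) \<and>
      \<comment> \<open>(ii) subsequent queries: measurable in the history and U_{t+1}\<close>
      (\<forall>t\<in>{1..n-1}. \<exists>f \<in> (Pi\<^sub>M {1..t} (\<lambda>_. borel) \<Otimes>\<^sub>M borel) \<rightarrow>\<^sub>M borel.
         \<forall>\<omega>\<in>space M. x (Suc t) \<omega> = f (history y eps x t \<omega>, U (Suc t) \<omega>)) \<and>
      \<comment> \<open>(iii) output: measurable in the full history and Ustar\<close>
      (\<exists>g \<in> (Pi\<^sub>M {1..n} (\<lambda>_. borel) \<Otimes>\<^sub>M borel) \<rightarrow>\<^sub>M borel.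
         \<forall>\<omega>\<in>space M. xhat \<omega> = g (history y eps x n \<omega>, Ustar \<omega>)) \<and>
      \<comment> \<open>(iv) output is one of the queried points\<close>
      (\<forall>\<omega>\<in>space M. xhat \<omega> \<in> (\<lambda>t. x t \<omega>) ` {1..n}) \<and>
      \<comment> \<open>queries lie in the domain [0,1]^d\<close>
      (\<forall>t\<in>{1..n}. \<forall>\<omega>\<in>space M. x t \<omega> \<in> unit_cube))"

end

theory Submission
  imports Defs
begin

lemma x_meas:
  assumes M: "prob_space M"
    and y_meas: "y \<in> borel_measurable borel"
    and eps_meas: "(\<lambda>(z, \<omega>). eps z \<omega>) \<in> borel_measurable (borel \<Otimes>\<^sub>M M)"
    and alg: "admissible_run M y eps n U Ustar x xhat"
  shows "t \<in> {1..n} \<Longrightarrow> x t \<in> borel_measurable M"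
proof (induction t rule: nat_less_induct)
  case (1 t)
  have U: "\<And>t. t\<in>{1..n} \<Longrightarrow> U t \<in> borel_measurable M" using alg by (simp add: admissible_run_def)
  show ?case
  proof (cases "t = 1")
    case True
    from alg obtain f1 where f1: "f1 \<in> borel_measurable borel" "\<forall>\<omega>\<in>space M. x 1 \<omega> = f1 (U 1 \<omega>)"
      by (auto simp: admissible_run_def)
    have "(\<lambda>\<omega>. f1 (U 1 \<omega>)) \<in> borel_measurable M"
      using measurable_compose[OF U[of 1] f1(1)] "1.prems" True by auto
    then show ?thesis using True f1(2) measurable_cong by fastforce
  next
    case False
    then obtain s where s: "t = Suc s" "s \<in> {1..n-1}" proof -
      have "t = Suc (t - 1)" "t - 1 \<in> {1..n-1}" using "1.prems" False by auto
      then show ?thesis using that by blast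
    qed
    have "\<forall>t\<in>{1..n-1}. \<exists>f \<in> (Pi\<^sub>M {1..t} (\<lambda>_. borel) \<Otimes>\<^sub>M borel) \<rightarrow>\<^sub>M borel.
         \<forall>\<omega>\<in>space M. x (Suc t) \<omega> = f (history y eps x t \<omega>, U (Suc t) \<omega>)"
      using alg unfolding admissible_run_def by blast
    from bspec[OF this s(2)] obtain f where f: "f \<in> (Pi\<^sub>M {1..s} (\<lambda>_. borel) \<Otimes>\<^sub>M borel) \<rightarrow>\<^sub>M borel"
        "\<forall>\<omega>\<in>space M. x (Suc s) \<omega> = f (history y eps x s \<omega>, U (Suc s) \<omega>)"
      by blast
    have xs: "\<And>r. r \<in> {1..s} \<Longrightarrow> x r \<in> borel_measurable M" using "1.IH" s by auto
    have e: "\<And>r. r \<in> {1..s} \<Longrightarrow> (\<lambda>\<omega>. eps (x r \<omega>) \<omega>) \<in> borel_measurable M"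
    proof -
      fix r assume r: "r \<in> {1..s}"
      have "(\<lambda>\<omega>. (x r \<omega>, \<omega>)) \<in> M \<rightarrow>\<^sub>M borel \<Otimes>\<^sub>M M" by (rule measurable_Pair[OF xs[OF r] measurable_ident_sets]) simp
      from measurable_compose[OF this eps_meas] show "(\<lambda>\<omega>. eps (x r \<omega>) \<omega>) \<in> borel_measurable M" by simp
    qed
    have c: "\<And>r. r \<in> {1..s} \<Longrightarrow> (\<lambda>\<omega>. (x r \<omega>, y (x r \<omega>) + eps (x r \<omega>) \<omega>)) \<in> borel_measurable M"
    proof -
      fix r assume r: "r \<in> {1..s}"
      have "(\<lambda>\<omega>. (x r \<omega>, y (x r \<omega>) + eps (x r \<omega>) \<omega>)) \<in> M \<rightarrow>\<^sub>M borel \<Otimes>\<^sub>M borel"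
        using xs[OF r] e[OF r] y_meas by (intro measurable_Pair borel_measurable_add measurable_compose[OF xs[OF r] y_meas]) auto
      then show "(\<lambda>\<omega>. (x r \<omega>, y (x r \<omega>) + eps (x r \<omega>) \<omega>)) \<in> borel_measurable M"
        by (simp add: borel_prod)
    qed
    have h: "history y eps x s \<in> M \<rightarrow>\<^sub>M Pi\<^sub>M {1..s} (\<lambda>_. borel)"
      unfolding history_def[abs_def] by (rule measurable_restrict) (use c in auto)
    have "(\<lambda>\<omega>. f (history y eps x s \<omega>, U (Suc s) \<omega>)) \<in> borel_measurable M"
      using s by (intro measurable_compose[OF _ f(1)] measurable_Pair h U) auto
    then show ?thesis using s f(2) measurable_cong by fastforce
  qed
qed

lemma hit_meas:
  assumes xm: "\<And>t. t \<in> {1..n} \<Longrightarrow> x t \<in> borel_measurable M" and Z: "Z \<in> sets borel"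
  shows "hit_time n x Z \<in> measurable M (count_space UNIV)"
proof -
  have s: "\<And>t. t \<in> {1..n} \<Longrightarrow> {\<omega>\<in>space M. x t \<omega> \<in> Z} \<in> sets M"
  proof -
    fix t assume t: "t \<in> {1..n}"
    have "{\<omega>\<in>space M. x t \<omega> \<in> Z} = x t -` Z \<inter> space M" by blast
    then show "{\<omega>\<in>space M. x t \<omega> \<in> Z} \<in> sets M" using measurable_sets[OF xm[OF t] Z] by simp
  qed
  have p: "\<And>t. Measurable.pred M (\<lambda>\<omega>. t \<in> {1..n} \<and> x t \<omega> \<in> Z)"
  proof -
    fix t
    have "{\<omega>\<in>space M. t \<in> {1..n} \<and> x t \<omega> \<in> Z} \<in> sets M"
    proof (cases "t \<in> {1..n}")
      case True
      have "{\<omega>\<in>space M. t \<in> {1..n} \<and> x t \<omega> \<in> Z} = {\<omega>\<in>space M. x t \<omega> \<in> Z}" using True by blast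
      then show ?thesis using s[OF True] by metis
    next
      case False
      then have "{\<omega>\<in>space M. t \<in> {1..n} \<and> x t \<omega> \<in> Z} = {}" by blast
      then show ?thesis by (metis sets.empty_sets)
    qed
    then show "Measurable.pred M (\<lambda>\<omega>. t \<in> {1..n} \<and> x t \<omega> \<in> Z)" unfolding pred_def .
  qed
  have q: "{\<omega>\<in>space M. \<exists>t\<in>{1..n}. x t \<omega> \<in> Z} \<in> sets M"
  proof -
    have "{\<omega>\<in>space M. \<exists>t\<in>{1..n}. x t \<omega> \<in> Z} = (\<Union>t\<in>{1..n}. {\<omega>\<in>space M. x t \<omega> \<in> Z})" by blast
    moreover have "(\<Union>t\<in>{1..n}. {\<omega>\<in>space M. x t \<omega> \<in> Z}) \<in> sets M"
      by (rule sets.finite_UN) (use s in auto)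
    ultimately show ?thesis by metis
  qed
  have l: "(\<lambda>\<omega>. LEAST t. t \<in> {1..n} \<and> x t \<omega> \<in> Z) \<in> measurable M (count_space UNIV)"
    by (rule measurable_Least[OF p])
  have c: "(\<lambda>\<omega>. n + 1) \<in> measurable M (count_space UNIV)" by (rule measurable_const) auto
  show ?thesis unfolding hit_time_def[abs_def]
    by (rule measurable_If[OF l c q])
qed

lemma pred_nat2:
  fixes f g :: "'a \<Rightarrow> nat"
  assumes f: "f \<in> measurable M (count_space UNIV)" and g: "g \<in> measurable M (count_space UNIV)"
  shows "(\<lambda>\<omega>. R (f \<omega>) (g \<omega>)) \<in> measurable M (count_space (UNIV::bool set))"
proof -
  have i: "(\<lambda>\<omega>. R (f \<omega>) j) \<in> measurable M (count_space (UNIV::bool set))" for j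
  proof -
    have "(\<lambda>\<omega>. (\<lambda>i \<omega>. R i j) (f \<omega>) \<omega>) \<in> measurable M (count_space (UNIV::bool set))"
      by (rule measurable_compose_countable'[OF measurable_const f]) auto
    then show ?thesis by simp
  qed
  have "(\<lambda>\<omega>. (\<lambda>j \<omega>. R (f \<omega>) j) (g \<omega>) \<omega>) \<in> measurable M (count_space (UNIV::bool set))"
    by (rule measurable_compose_countable'[OF i g]) auto
  then show ?thesis by simp
qed

lemma hit_le:
  assumes "hit_time n x Z \<omega> \<le> n"
  shows "hit_time n x Z \<omega> \<in> {1..n} \<and> x (hit_time n x Z \<omega>) \<omega> \<in> Z"
proof (cases "\<exists>t\<in>{1..n}. x t \<omega> \<in> Z")
  case True
  have h: "hit_time n x Z \<omega> = (LEAST t. t \<in> {1..n} \<and> x t \<omega> \<in> Z)"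
    unfolding hit_time_def using True by (rule if_P)
  have e: "\<exists>t. t \<in> {1..n} \<and> x t \<omega> \<in> Z" using True by blast
  show ?thesis unfolding h by (rule LeastI_ex[OF e])
next
  case False
  have h: "hit_time n x Z \<omega> = n + 1"
    unfolding hit_time_def using False by (rule if_not_P)
  then show ?thesis using assms by linarith
qed

lemma hit_min:
  assumes t: "t \<in> {1..n}" "x t \<omega> \<in> Z" shows "hit_time n x Z \<omega> \<le> t"
proof -
  have True: "\<exists>t\<in>{1..n}. x t \<omega> \<in> Z" using t by blast
  have h: "hit_time n x Z \<omega> = (LEAST t. t \<in> {1..n} \<and> x t \<omega> \<in> Z)"
    unfolding hit_time_def using True by (rule if_P)
  show ?thesis unfolding h by (rule Least_le) (rule conjI[OF t])
qed

lemma hit_bounds: "1 \<le> hit_time n x Z \<omega> \<and> hit_time n x Z \<omega> \<le> n + 1"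
proof (cases "\<exists>t\<in>{1..n}. x t \<omega> \<in> Z")
  case True
  then obtain t where t: "t\<in>{1..n}" "x t \<omega> \<in> Z" by blast
  have h: "hit_time n x Z \<omega> = (LEAST t. t \<in> {1..n} \<and> x t \<omega> \<in> Z)"
    unfolding hit_time_def using True by (rule if_P)
  have m: "(LEAST t. t \<in> {1..n} \<and> x t \<omega> \<in> Z) \<in> {1..n}"
    using LeastI[of "\<lambda>t. t \<in> {1..n} \<and> x t \<omega> \<in> Z", OF conjI[OF t]] by (rule conjunct1)
  have "1 \<le> (LEAST t. t \<in> {1..n} \<and> x t \<omega> \<in> Z) \<and> (LEAST t. t \<in> {1..n} \<and> x t \<omega> \<in> Z) \<le> n"
    using m by (simp only: atLeastAtMost_iff)
  then show ?thesis unfolding h by linarith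
next
  case False
  have h: "hit_time n x Z \<omega> = n + 1"
    unfolding hit_time_def using False by (rule if_not_P)
  show ?thesis unfolding h by linarith
qed

lemma hit_mono: "Z \<subseteq> Z' \<Longrightarrow> hit_time n x Z' \<omega> \<le> hit_time n x Z \<omega>"
proof (cases "hit_time n x Z \<omega> \<le> n")
  case True
  assume "Z \<subseteq> Z'"
  have "x (hit_time n x Z \<omega>) \<omega> \<in> Z" using hit_le[OF True] by (rule conjunct2)
  then have "x (hit_time n x Z \<omega>) \<omega> \<in> Z'" using \<open>Z \<subseteq> Z'\<close> by (rule subsetD[rotated])
  then show ?thesis by (rule hit_min[OF conjunct1[OF hit_le[OF True]]])
next
  case False
  have "hit_time n x Z' \<omega> \<le> n + 1" using hit_bounds[of n x Z' \<omega>] by (rule conjunct2)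
  then show ?thesis using False by linarith
qed

lemma ind_eq: "w \<in> S \<Longrightarrow> Q w \<Longrightarrow> indicator {\<omega>\<in>S. P \<omega> \<and> Q \<omega>} w = (if P w then 1 else (0::real))"
  by (simp add: indicator_def)

lemma avg:
  assumes M: "prob_space M" and I: "finite I"
    and Q: "Measurable.pred M Q" and P: "\<And>k. k \<in> I \<Longrightarrow> Measurable.pred M (P k)"
    and Ine: "I \<noteq> {}" and pos: "\<P>(\<omega> in M. Q \<omega>) > 0"
    and cnt: "\<And>\<omega>. \<omega> \<in> space M \<Longrightarrow> Q \<omega> \<Longrightarrow> real (card I) \<le> 2 * real (card {k\<in>I. P k \<omega>})"
  shows "\<exists>k\<in>I. \<P>(\<omega> in M. P k \<omega> \<bar> Q \<omega>) \<ge> 1/2"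
proof (rule ccontr)
  interpret prob_space M by fact
  assume "\<not> ?thesis"
  then have lt: "\<And>k. k \<in> I \<Longrightarrow> \<P>(\<omega> in M. P k \<omega> \<and> Q \<omega>) < 1/2 * \<P>(\<omega> in M. Q \<omega>)"
    using pos by (auto simp: cond_prob_def field_simps)
  have ev: "\<And>k. k \<in> I \<Longrightarrow> {\<omega> \<in> space M. P k \<omega> \<and> Q \<omega>} \<in> sets M" using P Q by measurable
  have evQ: "{\<omega> \<in> space M. Q \<omega>} \<in> sets M" using Q by measurable
  have "real (card I) / 2 * \<P>(\<omega> in M. Q \<omega>) = (\<integral>\<omega>. real (card I) / 2 * indicator {\<omega> \<in> space M. Q \<omega>} \<omega> \<partial>M)"
    using evQ by simp
  also have "\<dots> \<le> (\<integral>\<omega>. (\<Sum>k\<in>I. indicator {\<omega> \<in> space M. P k \<omega> \<and> Q \<omega>} \<omega>) \<partial>M)"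
  proof (rule integral_mono)
    show "integrable M (\<lambda>\<omega>. real (card I) / 2 * indicator {\<omega> \<in> space M. Q \<omega>} \<omega>)"
      using evQ by (intro integrable_mult_right) (simp add: integrable_indicator_iff emeasure_finite less_top[symmetric])
    show "integrable M (\<lambda>\<omega>. \<Sum>k\<in>I. indicator {\<omega> \<in> space M. P k \<omega> \<and> Q \<omega>} \<omega> :: real)"
      by (rule Bochner_Integration.integrable_sum[of I M "\<lambda>k \<omega>. indicator {\<omega> \<in> space M. P k \<omega> \<and> Q \<omega>} \<omega>", simplified], rule integrable_real_indicator) (auto simp: ev emeasure_finite less_top[symmetric])
    fix \<omega> assume w: "\<omega> \<in> space M"
    show "real (card I) / 2 * indicator {\<omega> \<in> space M. Q \<omega>} \<omega> \<le> (\<Sum>k\<in>I. indicator {\<omega> \<in> space M. P k \<omega> \<and> Q \<omega>} \<omega>)"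
    proof (cases "Q \<omega>")
      case True
      have "(\<Sum>k\<in>I. indicator {\<omega> \<in> space M. P k \<omega> \<and> Q \<omega>} \<omega> :: real) = (\<Sum>k\<in>I. if P k \<omega> then 1 else 0)"
        by (intro sum.cong refl ind_eq[OF w, of Q] True)
      also have "\<dots> = real (card (I \<inter> {k. P k \<omega>}))"
        using I by (simp add: sum.If_cases)
      also have "I \<inter> {k. P k \<omega>} = {k\<in>I. P k \<omega>}" by blast
      finally have eq: "(\<Sum>k\<in>I. indicator {\<omega> \<in> space M. P k \<omega> \<and> Q \<omega>} \<omega> :: real) = real (card {k\<in>I. P k \<omega>})" .
      have ind: "indicator {\<omega> \<in> space M. Q \<omega>} \<omega> = (1::real)" using w True by (simp add: indicator_def)
      show ?thesis unfolding ind eq using cnt[OF w True] by linarith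
    next
      case False
      then show ?thesis by (simp add: indicator_def sum_nonneg)
    qed
  qed
  also have "\<dots> = (\<Sum>k\<in>I. \<P>(\<omega> in M. P k \<omega> \<and> Q \<omega>))"
    by (subst Bochner_Integration.integral_sum) (auto simp: ev emeasure_finite less_top[symmetric] intro!: integrable_real_indicator)
  finally have A: "real (card I) / 2 * \<P>(\<omega> in M. Q \<omega>) \<le> (\<Sum>k\<in>I. \<P>(\<omega> in M. P k \<omega> \<and> Q \<omega>))" .
  show False
  proof -
    have "(\<Sum>k\<in>I. \<P>(\<omega> in M. P k \<omega> \<and> Q \<omega>)) < (\<Sum>k\<in>I. 1/2 * \<P>(\<omega> in M. Q \<omega>))"
      using lt I Ine by (intro sum_strict_mono) auto
    then show False using A by simp
  qed
qed

lemma inj_hits: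
  assumes "disjoint_family_on Z I"
  shows "inj_on (\<lambda>k. hit_time n x (Z k) \<omega>) {k\<in>I. hit_time n x (Z k) \<omega> \<le> n}"
proof (rule inj_onI)
  fix k k' assume k: "k \<in> {k\<in>I. hit_time n x (Z k) \<omega> \<le> n}" and k': "k' \<in> {k\<in>I. hit_time n x (Z k) \<omega> \<le> n}"
    and eq: "hit_time n x (Z k) \<omega> = hit_time n x (Z k') \<omega>"
  have a: "x (hit_time n x (Z k) \<omega>) \<omega> \<in> Z k" using hit_le[of n x "Z k" \<omega>] k by blast
  have b: "x (hit_time n x (Z k) \<omega>) \<omega> \<in> Z k'" unfolding eq using hit_le[of n x "Z k'" \<omega>] k' by blast
  show "k = k'"
  proof (rule ccontr)
    assume "k \<noteq> k'"
    then have "Z k \<inter> Z k' = {}" using assms k k' unfolding disjoint_family_on_def by blast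
    then show False using a b by blast
  qed
qed

lemma count_lemma:
  assumes I: "finite I" and inj: "inj_on h {k\<in>I. \<not> P k}" and im: "h ` {k\<in>I. \<not> P k} \<subseteq> B"
    and B: "finite B" "card B \<le> D" and D: "2 * D \<le> card I"
  shows "real (card I) \<le> 2 * real (card {k\<in>I. P k})"
proof -
  have c1: "card {k\<in>I. \<not> P k} \<le> D"
    using card_inj_on_le[OF inj im B(1)] B(2) by linarith
  have e: "{k\<in>I. P k} = I - {k\<in>I. \<not> P k}" by blast
  have c2: "card {k\<in>I. P k} = card I - card {k\<in>I. \<not> P k}"
    unfolding e by (rule card_Diff_subset) (use I in auto)
  have "card I \<le> 2 * card {k\<in>I. P k}" using c1 c2 D by linarith
  then show ?thesis by linarith
qed

theorem corollary1:
  fixes M :: "'w measure"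
    and y :: "real ^ 'd \<Rightarrow> real"
    and eps :: "real ^ 'd \<Rightarrow> 'w \<Rightarrow> real"
    and n :: nat
    and U :: "nat \<Rightarrow> 'w \<Rightarrow> 'u::euclidean_space"
    and Ustar :: "'w \<Rightarrow> 'u"
    and x :: "nat \<Rightarrow> 'w \<Rightarrow> real ^ 'd"
    and xhat :: "'w \<Rightarrow> real ^ 'd"
    and Zt :: "(real ^ 'd) set"
    and Z :: "nat \<Rightarrow> (real ^ 'd) set"
  assumes M: "prob_space M"
    and y_meas: "y \<in> borel_measurable borel"
    and eps_meas: "(\<lambda>(z, \<omega>). eps z \<omega>) \<in> borel_measurable (borel \<Otimes>\<^sub>M M)"
    and alg: "admissible_run M y eps n U Ustar x xhat"
    and Zt_sub: "Zt \<subseteq> unit_cube"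
    and Zt_borel: "Zt \<in> sets borel"
    and Z_borel: "\<And>k. k \<in> {1..3 ^ CARD('d)} \<Longrightarrow> Z k \<in> sets borel"
    and Z_sub: "\<And>k. k \<in> {1..3 ^ CARD('d)} \<Longrightarrow> Z k \<subseteq> Zt"
    and Z_disj: "disjoint_family_on Z {1..3 ^ CARD('d)}"
  shows
    "(let \<Delta> = (3 ^ CARD('d)) div 2 in
      (\<P>(\<omega> in M. hit_time n x Zt \<omega> \<le> n - \<Delta>) > 0 \<longrightarrow>
        (\<exists>\<kappa>1\<in>{1..3 ^ CARD('d)}.
          \<P>(\<omega> in M. hit_time n x (Z \<kappa>1) \<omega> \<ge> hit_time n x Zt \<omega> + \<Delta>
                   \<bar> hit_time n x Zt \<omega> \<le> n - \<Delta>) \<ge> 1 / 2)) \<and>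
      (\<P>(\<omega> in M. hit_time n x Zt \<omega> \<le> n - \<Delta>) < 1 \<longrightarrow>
        (\<exists>\<kappa>2\<in>{1..3 ^ CARD('d)}.
          \<P>(\<omega> in M. hit_time n x (Z \<kappa>2) \<omega> > n
                   \<bar> hit_time n x Zt \<omega> > n - \<Delta>) \<ge> 1 / 2)))"
proof -
  interpret prob_space M by (rule M)
  define K :: nat where "K = 3 ^ CARD('d)"
  define D :: nat where "D = K div 2"
  define I where "I = {1..K}"
  have I: "finite I" "I \<noteq> {}" unfolding I_def K_def by auto
  have KD: "2 * D \<le> card I" unfolding I_def D_def by simp
  have xm: "\<And>t. t \<in> {1..n} \<Longrightarrow> x t \<in> borel_measurable M"
    using x_meas[OF M y_meas eps_meas alg] by blast
  have ht: "hit_time n x Zt \<in> measurable M (count_space UNIV)" by (rule hit_meas[OF xm Zt_borel])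
  have hk: "\<And>k. k \<in> I \<Longrightarrow> hit_time n x (Z k) \<in> measurable M (count_space UNIV)"
  proof -
    fix k assume "k \<in> I"
    then have kk: "k \<in> {1..3 ^ CARD('d)}" unfolding I_def K_def .
    show "hit_time n x (Z k) \<in> measurable M (count_space UNIV)" by (rule hit_meas[OF xm Z_borel[OF kk]])
  qed
  have Zsub: "\<And>k. k \<in> I \<Longrightarrow> Z k \<subseteq> Zt" using Z_sub unfolding I_def K_def by blast
  have disj: "disjoint_family_on Z I" using Z_disj unfolding I_def K_def .
  have Q1: "Measurable.pred M (\<lambda>\<omega>. hit_time n x Zt \<omega> \<le> n - D)"
    using pred_nat2[OF ht ht, of "\<lambda>a b. a \<le> n - D"] by simp
  have Q2: "Measurable.pred M (\<lambda>\<omega>. hit_time n x Zt \<omega> > n - D)"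
    using pred_nat2[OF ht ht, of "\<lambda>a b. a > n - D"] by simp
  have P1: "\<And>k. k \<in> I \<Longrightarrow> Measurable.pred M (\<lambda>\<omega>. hit_time n x (Z k) \<omega> \<ge> hit_time n x Zt \<omega> + D)"
    using pred_nat2[OF hk ht, of _ "\<lambda>a b. a \<ge> b + D"] by simp
  have P2: "\<And>k. k \<in> I \<Longrightarrow> Measurable.pred M (\<lambda>\<omega>. hit_time n x (Z k) \<omega> > n)"
    using pred_nat2[OF hk ht, of _ "\<lambda>a b. a > n"] by simp
  have part1: "\<exists>k\<in>I. \<P>(\<omega> in M. hit_time n x (Z k) \<omega> \<ge> hit_time n x Zt \<omega> + D \<bar> hit_time n x Zt \<omega> \<le> n - D) \<ge> 1 / 2"
    if pos: "\<P>(\<omega> in M. hit_time n x Zt \<omega> \<le> n - D) > 0"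
  proof (rule avg[OF M I(1) Q1 P1 I(2) pos])
    fix \<omega> assume w: "\<omega> \<in> space M" and q: "hit_time n x Zt \<omega> \<le> n - D"
    let ?\<tau> = "hit_time n x Zt \<omega>"
    let ?h = "\<lambda>k. hit_time n x (Z k) \<omega>"
    have sub: "{k\<in>I. \<not> ?\<tau> + D \<le> ?h k} \<subseteq> {k\<in>I. ?h k \<le> n}"
    proof
      fix k assume "k \<in> {k\<in>I. \<not> ?\<tau> + D \<le> ?h k}"
      then have "k \<in> I" "?h k < ?\<tau> + D" by auto
      moreover have "1 \<le> ?\<tau>" using hit_bounds[of n x Zt \<omega>] by (rule conjunct1)
      ultimately show "k \<in> {k\<in>I. ?h k \<le> n}" using q by simp
    qed
    show "real (card I) \<le> 2 * real (card {k\<in>I. ?\<tau> + D \<le> ?h k})"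
    proof (rule count_lemma[OF I(1) inj_on_subset[OF inj_hits[OF disj] sub]])
      show "?h ` {k\<in>I. \<not> ?\<tau> + D \<le> ?h k} \<subseteq> {?\<tau>..<?\<tau> + D}"
        using hit_mono[OF Zsub] by fastforce
    qed (use KD in auto)
  qed
  have part2: "\<exists>k\<in>I. \<P>(\<omega> in M. hit_time n x (Z k) \<omega> > n \<bar> hit_time n x Zt \<omega> > n - D) \<ge> 1 / 2"
    if lt1: "\<P>(\<omega> in M. hit_time n x Zt \<omega> \<le> n - D) < 1"
  proof -
    have ev1: "{\<omega>\<in>space M. hit_time n x Zt \<omega> \<le> n - D} \<in> events" using Q1 unfolding pred_def .
    have "{\<omega>\<in>space M. hit_time n x Zt \<omega> > n - D} = space M - {\<omega>\<in>space M. hit_time n x Zt \<omega> \<le> n - D}"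
      by auto
    then have "\<P>(\<omega> in M. hit_time n x Zt \<omega> > n - D) = 1 - \<P>(\<omega> in M. hit_time n x Zt \<omega> \<le> n - D)"
      using prob_compl[OF ev1] by simp
    then have pos: "\<P>(\<omega> in M. hit_time n x Zt \<omega> > n - D) > 0" using lt1 by simp
    show ?thesis
    proof (rule avg[OF M I(1) Q2 P2 I(2) pos])
      fix \<omega> assume w: "\<omega> \<in> space M" and q: "hit_time n x Zt \<omega> > n - D"
      let ?\<tau> = "hit_time n x Zt \<omega>"
      let ?h = "\<lambda>k. hit_time n x (Z k) \<omega>"
      have sub: "{k\<in>I. \<not> ?h k > n} \<subseteq> {k\<in>I. ?h k \<le> n}" by auto
      show "real (card I) \<le> 2 * real (card {k\<in>I. ?h k > n})"
      proof (rule count_lemma[OF I(1) inj_on_subset[OF inj_hits[OF disj] sub]])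
        show "?h ` {k\<in>I. \<not> ?h k > n} \<subseteq> {n - D<..n}"
        proof
          fix t assume "t \<in> ?h ` {k\<in>I. \<not> ?h k > n}"
          then obtain k where k: "k \<in> I" "\<not> ?h k > n" "t = ?h k" by blast
          have "?\<tau> \<le> ?h k" by (rule hit_mono[OF Zsub[OF k(1)]])
          then show "t \<in> {n - D<..n}" using k q by simp
        qed
      qed (use KD in auto)
    qed
  qed
  show ?thesis
    unfolding Let_def using part1 part2 unfolding I_def K_def D_def by blast
qed

end
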